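(* Let $\bm{w},\bm{v}$ be two unit vectors in $\mathbb{R}^d$ and $\bm{U}$ a linear subspace of $\mathbb{R}^d$, and assume that $\bm{w}$ and $\bm{v}$ do not both lie in $\bm{U}$. Then $\sin\theta(\mathrm{span}(\bm{U},\bm{w}),\mathrm{span}(\bm{U},\bm{v}))\le\frac{\sin\theta(\bm{w},\bm{v})}{\max\{\sin\theta(\bm{w},\bm{U}),\sin\theta(\bm{v},\bm{U})\}}$.
   Context: $\theta(\bm{x},\bm{y})$ is the angle between nonzero vectors; for a vector $\bm{x}$ and subspace $\bm{U}$, $\theta(\bm{x},\bm{U})=\min_{\bm{u}\in\bm{U}}\theta(\bm{x},\bm{u})$; for subspaces $\bm{U},\bm{V}$, $\theta(\bm{U},\bm{V})=\max_{\bm{u}\in\bm{U}}\theta(\bm{u},\bm{V})$. *)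

theory Defs
  imports "HOL-Analysis.Analysis"
begin

definition vec_angle :: "'a::real_inner \<Rightarrow> 'a \<Rightarrow> real" where
  "vec_angle x y = arccos ((x \<bullet> y) / (norm x * norm y))"

definition angle_vec_sub :: "'a::euclidean_space \<Rightarrow> 'a set \<Rightarrow> real" where
  "angle_vec_sub x U = (if U \<subseteq> {0} then pi / 2 else (INF u\<in>U - {0}. vec_angle x u))"

definition angle_sub_sub :: "'a::euclidean_space set \<Rightarrow> 'a set \<Rightarrow> real" where
  "angle_sub_sub U V = (if U \<subseteq> {0} then 0 else (SUP u\<in>U - {0}. angle_vec_sub u V))"

end

theory Submission
  imports Defs
begin
lemma angle_vec_sub_eq:
  fixes x y z :: "'a::euclidean_space"
  assumes S: "subspace S" and x0: "x \<noteq> 0" and yS: "y \<in> S"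
    and zS: "\<And>u. u \<in> S \<Longrightarrow> z \<bullet> u = 0" and xyz: "x = y + z"
  shows "angle_vec_sub x S = arccos (norm y / norm x)"
proof -
  have yz: "y \<bullet> z = 0" using zS[OF yS] by (simp add: inner_commute)
  have nx: "(norm x)^2 = (norm y)^2 + (norm z)^2"
    using xyz yz by (simp add: power2_norm_eq_inner inner_add_left inner_add_right inner_commute)
  have nyx: "norm y \<le> norm x" using nx by (smt (verit) norm_ge_zero power2_le_imp_le zero_le_power2)
  have xpos: "norm x > 0" using x0 by simp
  have xu: "x \<bullet> u = y \<bullet> u" if "u \<in> S" for u
    using zS[OF that] xyz by (simp add: inner_add_left)
  show ?thesis
  proof (cases "S \<subseteq> {0}")
    case True
    then have "y = 0" using yS by auto
    then show ?thesis using True by (simp add: angle_vec_sub_def)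
  next
    case False
    then obtain u0 where u0: "u0 \<in> S" "u0 \<noteq> 0" by auto
    define m where "m = (if y = 0 then u0 else y)"
    have mS: "m \<in> S - {0}" using u0 yS by (auto simp: m_def)
    have mval: "vec_angle x m = arccos (norm y / norm x)"
    proof (cases "y = 0")
      case True
      then show ?thesis using xu[OF u0(1)] by (simp add: m_def vec_angle_def)
    next
      case False
      have "x \<bullet> y = (norm y)^2" using xu[OF yS] by (simp add: power2_norm_eq_inner)
      then show ?thesis using False xpos by (simp add: m_def vec_angle_def power2_eq_square)
    qed
    have lb: "arccos (norm y / norm x) \<le> vec_angle x u" if "u \<in> S - {0}" for u
    proof -
      have up: "norm u > 0" using that by simp
      have "x \<bullet> u \<le> norm y * norm u" using xu that norm_cauchy_schwarz by force
      then have a: "x \<bullet> u / (norm x * norm u) \<le> norm y / norm x"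
        using xpos up by (simp add: divide_simps mult.commute)
      have "- (norm x * norm u) \<le> x \<bullet> u"
        using norm_cauchy_schwarz[of "-x" u] by simp
      then have b: "-1 \<le> x \<bullet> u / (norm x * norm u)"
        using xpos up by (simp add: divide_simps)
      have c: "norm y / norm x \<le> 1" using nyx xpos by simp
      show ?thesis unfolding vec_angle_def by (rule arccos_le_arccos[OF b a c])
    qed
    have "(INF u\<in>S - {0}. vec_angle x u) = arccos (norm y / norm x)"
    proof (rule cInf_eq_minimum)
      show "arccos (norm y / norm x) \<in> vec_angle x ` (S - {0})" using mS mval by (metis image_eqI)
    qed (use lb in auto)
    then show ?thesis using False by (simp add: angle_vec_sub_def)
  qed
qed

lemma sin_angle_vec_sub:
  fixes x y z :: "'a::euclidean_space"
  assumes S: "subspace S" and x0: "x \<noteq> 0" and yS: "y \<in> S"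
    and zS: "\<And>u. u \<in> S \<Longrightarrow> z \<bullet> u = 0" and xyz: "x = y + z"
  shows "sin (angle_vec_sub x S) = norm z / norm x"
    and "0 \<le> angle_vec_sub x S" and "angle_vec_sub x S \<le> pi/2"
proof -
  have yz: "y \<bullet> z = 0" using zS[OF yS] by (simp add: inner_commute)
  have nx: "(norm x)^2 = (norm y)^2 + (norm z)^2"
    using xyz yz by (simp add: power2_norm_eq_inner inner_add_left inner_add_right inner_commute)
  have nyx: "norm y \<le> norm x" using nx by (smt (verit) norm_ge_zero power2_le_imp_le zero_le_power2)
  have xpos: "norm x > 0" using x0 by simp
  have c: "norm y / norm x \<le> 1" using nyx xpos by simp
  have c0: "0 \<le> norm y / norm x" by simp
  note e = angle_vec_sub_eq[OF assms]
  show "0 \<le> angle_vec_sub x S" using e arccos_lbound[of "norm y / norm x"] c c0 by simp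
  show "angle_vec_sub x S \<le> pi/2" using e arccos_le_pi2[of "norm y / norm x"] c c0 by simp
  have "sin (angle_vec_sub x S) = sqrt (1 - (norm y / norm x)^2)"
    using e sin_arccos[of "norm y / norm x"] c c0 by simp
  also have "1 - (norm y / norm x)^2 = (norm z / norm x)^2"
  proof -
    have "(norm x)^2 > 0" using xpos by simp
    then have "1 - (norm y / norm x)^2 = ((norm x)^2 - (norm y)^2) / (norm x)^2"
      by (simp add: power_divide field_simps)
    also have "\<dots> = (norm z / norm x)^2" using nx by (simp add: power_divide)
    finally show ?thesis .
  qed
  also have "sqrt ((norm z / norm x)^2) = norm z / norm x" by simp
  finally show "sin (angle_vec_sub x S) = norm z / norm x" .
qed

lemma sin_sup_le:
  fixes f :: "'b \<Rightarrow> real"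
  assumes ne: "A \<noteq> {}" and rng: "\<And>a. a \<in> A \<Longrightarrow> 0 \<le> f a \<and> f a \<le> pi/2"
    and le: "\<And>a. a \<in> A \<Longrightarrow> sin (f a) \<le> c" and c0: "0 \<le> c"
  shows "sin (SUP a\<in>A. f a) \<le> c"
proof (cases "c \<ge> 1")
  case True
  then show ?thesis using sin_le_one[of "SUP a\<in>A. f a"] by linarith
next
  case False
  have bdd: "bdd_above (f ` A)" using rng by (intro bdd_aboveI[of _ "pi/2"]) auto
  have ub: "f a \<le> arcsin c" if "a \<in> A" for a
  proof -
    have "f a = arcsin (sin (f a))" using rng[OF that] by (simp add: arcsin_sin)
    also have "\<dots> \<le> arcsin c"
      using le[OF that] False by (intro arcsin_le_arcsin) (auto simp: sin_ge_minus_one)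
    finally show ?thesis .
  qed
  obtain a0 where a0: "a0 \<in> A" using ne by auto
  have s1: "(SUP a\<in>A. f a) \<le> arcsin c" by (rule cSUP_least[OF ne ub])
  have s0: "f a0 \<le> (SUP a\<in>A. f a)" by (rule cSUP_upper[OF a0 bdd])
  have ab: "arcsin c \<le> pi/2" using arcsin_bounded[of c] False c0 by auto
  have "sin (SUP a\<in>A. f a) \<le> sin (arcsin c)"
    using s0 s1 rng[OF a0] ab by (subst sin_mono_le_eq) auto
  then show ?thesis using False c0 by simp
qed

lemma perp_r:
  fixes a b :: "'a::real_inner"
  shows "(a - ((a \<bullet> b) / (b \<bullet> b)) *\<^sub>R b) \<bullet> b = 0"
proof (cases "b = 0")
  case True then show ?thesis by simp
next
  case False
  then have "b \<bullet> b \<noteq> 0" by simp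
  then show ?thesis by (simp add: inner_diff_left)
qed

lemma norm_diff_scale_sq:
  fixes a b :: "'a::real_inner"
  shows "(norm (a - t *\<^sub>R b))^2 = a \<bullet> a - 2 * t * (a \<bullet> b) + t^2 * (b \<bullet> b)"
proof -
  have "(norm (a - t *\<^sub>R b))^2 = (a - t *\<^sub>R b) \<bullet> (a - t *\<^sub>R b)" by (rule power2_norm_eq_inner)
  also have "\<dots> = a \<bullet> a - 2 * t * (a \<bullet> b) + t^2 * (b \<bullet> b)"
    by (simp add: inner_diff_left inner_diff_right inner_commute power2_eq_square algebra_simps)
  finally show ?thesis .
qed

lemma norm_r_sq:
  fixes a b :: "'a::real_inner"
  shows "(norm (a - ((a \<bullet> b) / (b \<bullet> b)) *\<^sub>R b))^2 * (b \<bullet> b) = (a \<bullet> a) * (b \<bullet> b) - (a \<bullet> b)^2"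
proof (cases "b = 0")
  case True then show ?thesis by simp
next
  case False
  then have "b \<bullet> b \<noteq> 0" by simp
  then show ?thesis unfolding norm_diff_scale_sq by (simp add: field_simps power2_eq_square)
qed

lemma perp_bound:
  fixes p q yp zp yq zq :: "'a::real_inner"
  assumes np: "norm p = 1" and nq: "norm q = 1"
    and p: "p = yp + zp" and q: "q = yq + zq"
    and o1: "yp \<bullet> zp = 0" and o2: "yp \<bullet> zq = 0" and o3: "yq \<bullet> zp = 0" and o4: "yq \<bullet> zq = 0"
  shows "norm (zp - ((zp \<bullet> zq) / (zq \<bullet> zq)) *\<^sub>R zq) \<le> sqrt (1 - (p \<bullet> q)^2)"
proof -
  define \<alpha> where "\<alpha> = (zp \<bullet> zq) / (zq \<bullet> zq)"
  define \<beta> where "\<beta> = p \<bullet> q"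
  define r where "r = zp - \<alpha> *\<^sub>R zq"
  have rz: "r \<bullet> zq = 0" unfolding r_def \<alpha>_def by (rule perp_r)
  have "zp - \<beta> *\<^sub>R zq = r + (\<alpha> - \<beta>) *\<^sub>R zq" by (simp add: r_def algebra_simps)
  then have "(norm (zp - \<beta> *\<^sub>R zq))^2 = (norm r)^2 + (norm ((\<alpha> - \<beta>) *\<^sub>R zq))^2"
    using norm_add_Pythagorean[of r "(\<alpha> - \<beta>) *\<^sub>R zq"] rz by (simp add: orthogonal_def)
  then have 1: "(norm r)^2 \<le> (norm (zp - \<beta> *\<^sub>R zq))^2" by simp
  have "p - \<beta> *\<^sub>R q = (yp - \<beta> *\<^sub>R yq) + (zp - \<beta> *\<^sub>R zq)" by (simp add: p q algebra_simps)
  moreover have "orthogonal (yp - \<beta> *\<^sub>R yq) (zp - \<beta> *\<^sub>R zq)"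
    using o1 o2 o3 o4 by (simp add: orthogonal_def inner_diff_left inner_diff_right)
  ultimately have "(norm (p - \<beta> *\<^sub>R q))^2 = (norm (yp - \<beta> *\<^sub>R yq))^2 + (norm (zp - \<beta> *\<^sub>R zq))^2"
    using norm_add_Pythagorean by metis
  then have 2: "(norm (zp - \<beta> *\<^sub>R zq))^2 \<le> (norm (p - \<beta> *\<^sub>R q))^2" by simp
  have pp: "p \<bullet> p = 1" using np by (simp add: power2_norm_eq_inner[symmetric])
  have qq: "q \<bullet> q = 1" using nq by (simp add: power2_norm_eq_inner[symmetric])
  have 3: "(norm (p - \<beta> *\<^sub>R q))^2 = 1 - \<beta>^2"
    unfolding norm_diff_scale_sq using pp qq by (simp add: \<beta>_def power2_eq_square)
  have "(norm r)^2 \<le> 1 - \<beta>^2" using 1 2 3 by linarith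
  then have "norm r \<le> sqrt (1 - \<beta>^2)" by (simp add: real_le_rsqrt)
  then show ?thesis by (simp add: r_def \<alpha>_def \<beta>_def)
qed

theorem lemma10:
  fixes w v :: "'a::euclidean_space" and U :: "'a set"
  assumes "norm w = 1" and "norm v = 1"
    and "subspace U"
    and "\<not> (w \<in> U \<and> v \<in> U)"
  shows "sin (angle_sub_sub (span (insert w U)) (span (insert v U)))
           \<le> sin (vec_angle w v) / max (sin (angle_vec_sub w U)) (sin (angle_vec_sub v U))"
proof -
  note nw = assms(1) and nv = assms(2) and sU = assms(3)
  have spU: "span U = U" using sU by simp
  obtain yw zw where yw: "yw \<in> U" and zwo: "\<And>u. u \<in> U \<Longrightarrow> zw \<bullet> u = 0" and wd: "w = yw + zw"
    using orthogonal_subspace_decomp_exists[of U w] spU by (metis orthogonal_def)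
  obtain yv zv where yv: "yv \<in> U" and zvo: "\<And>u. u \<in> U \<Longrightarrow> zv \<bullet> u = 0" and vd: "v = yv + zv"
    using orthogonal_subspace_decomp_exists[of U v] spU by (metis orthogonal_def)
  have w0: "w \<noteq> 0" and v0: "v \<noteq> 0" using nw nv by auto
  have sw: "sin (angle_vec_sub w U) = norm zw"
    using sin_angle_vec_sub(1)[OF sU w0 yw zwo wd] nw by simp
  have sv: "sin (angle_vec_sub v U) = norm zv"
    using sin_angle_vec_sub(1)[OF sU v0 yv zvo vd] nv by simp
  have wvb: "\<bar>w \<bullet> v\<bar> \<le> 1" using Cauchy_Schwarz_ineq2[of w v] nw nv by simp
  define s where "s = sqrt (1 - (w \<bullet> v)^2)"
  have ss: "sin (vec_angle w v) = s"
  proof -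
    have "-1 \<le> w \<bullet> v" "w \<bullet> v \<le> 1" using wvb by auto
    have e: "sin (arccos (w \<bullet> v)) = sqrt (1 - (w \<bullet> v)^2)"
      by (rule sin_arccos) (use wvb in auto)
    show ?thesis unfolding vec_angle_def s_def using nw nv e by simp
  qed
  have s0: "0 \<le> s" unfolding s_def using wvb by (simp add: abs_square_le_1)
  have "zw \<noteq> 0 \<or> zv \<noteq> 0" using assms(4) yw yv wd vd by auto
  define M where "M = max (norm zw) (norm zv)"
  have Mpos: "M > 0" using \<open>zw \<noteq> 0 \<or> zv \<noteq> 0\<close> by (auto simp: M_def max_def)
  define c where "c = s / M"
  have c0: "0 \<le> c" using s0 Mpos by (simp add: c_def)
  have rhs: "sin (vec_angle w v) / max (sin (angle_vec_sub w U)) (sin (angle_vec_sub v U)) = c"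
    by (simp add: ss sw sv c_def M_def)
  define \<alpha> where "\<alpha> = (zw \<bullet> zv) / (zv \<bullet> zv)"
  define r where "r = zw - \<alpha> *\<^sub>R zv"
  define r' where "r' = zv - ((zv \<bullet> zw) / (zw \<bullet> zw)) *\<^sub>R zw"
  have ywzw: "yw \<bullet> zw = 0" using zwo[OF yw] by (simp add: inner_commute)
  have ywzv: "yw \<bullet> zv = 0" using zvo[OF yw] by (simp add: inner_commute)
  have yvzw: "yv \<bullet> zw = 0" using zwo[OF yv] by (simp add: inner_commute)
  have yvzv: "yv \<bullet> zv = 0" using zvo[OF yv] by (simp add: inner_commute)
  have rb: "norm r \<le> s" unfolding r_def \<alpha>_def s_def
    by (rule perp_bound[OF nw nv wd vd ywzw ywzv yvzw yvzv])
  have rb': "norm r' \<le> s" unfolding r'_def s_def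
    using perp_bound[OF nv nw vd wd yvzv yvzw ywzv ywzw] by (simp add: inner_commute)
  have area: "(norm r)^2 * (zv \<bullet> zv) = (norm r')^2 * (zw \<bullet> zw)"
    unfolding r_def r'_def \<alpha>_def norm_r_sq by (simp add: inner_commute algebra_simps)
  have area2: "norm r * norm zv = norm r' * norm zw"
  proof -
    have "(norm r * norm zv)^2 = (norm r' * norm zw)^2"
      using area by (simp add: power_mult_distrib power2_norm_eq_inner)
    then show ?thesis by (simp add: power2_eq_iff_nonneg)
  qed
  have rU: "r \<bullet> u = 0" if "u \<in> U" for u
    using zwo[OF that] zvo[OF that] by (simp add: r_def inner_diff_left)
  have rzv: "r \<bullet> zv = 0" unfolding r_def \<alpha>_def by (rule perp_r)
  have rv: "r \<bullet> v = 0" using rU[OF yv] rzv by (simp add: vd inner_add_right)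
  have key: "norm r / norm zw \<le> c" if "zw \<noteq> 0"
  proof (cases "M = norm zw")
    case True
    then show ?thesis using rb that by (simp add: c_def divide_right_mono)
  next
    case False
    then have M: "M = norm zv" unfolding M_def by (auto split: if_splits simp: max_def)
    then have "norm zv > 0" using Mpos by simp
    have "norm r * norm zv \<le> s * norm zw" using area2 rb' by (simp add: mult_right_mono)
    then show ?thesis using \<open>norm zv > 0\<close> that by (simp add: c_def M divide_simps mult.commute)
  qed
  let ?A = "span (insert w U)" and ?V = "span (insert v U)"
  have sV: "subspace ?V" by (rule subspace_span)
  have each: "sin (angle_vec_sub a ?V) \<le> c \<and> 0 \<le> angle_vec_sub a ?V \<and> angle_vec_sub a ?V \<le> pi/2"
    if a: "a \<in> ?A - {0}" for a
  proof -
    obtain t where ut: "a - t *\<^sub>R w \<in> U" using a spU by (auto simp: span_insert)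
    define u where "u = a - t *\<^sub>R w"
    have a0: "a \<noteq> 0" using a by simp
    have yV: "a - t *\<^sub>R r \<in> ?V"
    proof -
      have "a - t *\<^sub>R r - (t * \<alpha>) *\<^sub>R v = u + t *\<^sub>R yw - (t * \<alpha>) *\<^sub>R yv"
        by (simp add: u_def r_def wd vd algebra_simps)
      moreover have "u + t *\<^sub>R yw - (t * \<alpha>) *\<^sub>R yv \<in> U"
        using ut yw yv sU unfolding u_def[symmetric]
        by (meson subspace_diff subspace_add subspace_scale)
      ultimately show ?thesis unfolding span_insert spU by (simp only: mem_Collect_eq) metis
    qed
    have zV: "(t *\<^sub>R r) \<bullet> x = 0" if xV: "x \<in> ?V" for x
    proof -
      obtain k where "x - k *\<^sub>R v \<in> U" using xV spU by (auto simp: span_insert)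
      then have "r \<bullet> (x - k *\<^sub>R v) = 0" by (rule rU)
      then show ?thesis using rv by (simp add: inner_diff_right)
    qed
    have dec: "a = (a - t *\<^sub>R r) + t *\<^sub>R r" by simp
    note sa = sin_angle_vec_sub[OF sV a0 yV zV dec]
    have "sin (angle_vec_sub a ?V) \<le> c"
    proof (cases "t = 0 \<or> zw = 0")
      case True
      then have "t *\<^sub>R r = 0" by (auto simp: r_def \<alpha>_def)
      then show ?thesis using sa(1) c0 by (auto simp del: norm_scaleR)
    next
      case False
      have "a = (u + t *\<^sub>R yw) + t *\<^sub>R zw" by (simp add: u_def wd algebra_simps)
      moreover have "orthogonal (u + t *\<^sub>R yw) (t *\<^sub>R zw)"
        using zwo[OF ut] zwo[OF yw] unfolding u_def[symmetric] orthogonal_def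
        by (simp add: inner_add_left inner_add_right inner_commute)
      ultimately have "(norm a)^2 = (norm (u + t *\<^sub>R yw))^2 + (norm (t *\<^sub>R zw))^2"
        using norm_add_Pythagorean by metis
      then have "(norm (t *\<^sub>R zw))^2 \<le> (norm a)^2" by simp
      then have na: "\<bar>t\<bar> * norm zw \<le> norm a" using power2_le_imp_le by fastforce
      have tz: "\<bar>t\<bar> * norm zw > 0" using False by simp
      have "norm (t *\<^sub>R r) / norm a \<le> (\<bar>t\<bar> * norm r) / (\<bar>t\<bar> * norm zw)"
        unfolding norm_scaleR by (rule frac_le) (use na tz in auto)
      also have "\<dots> = norm r / norm zw" using False by simp
      also have "\<dots> \<le> c" using key False by simp
      finally show ?thesis using sa(1) by simp
    qed
    then show ?thesis using sa(2,3) by simp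
  qed
  have "sin (angle_sub_sub ?A ?V) \<le> c"
  proof (cases "?A \<subseteq> {0}")
    case True
    then show ?thesis using c0 by (simp add: angle_sub_sub_def)
  next
    case False
    then have ne: "?A - {0} \<noteq> {}" by auto
    have "sin (SUP a\<in>?A - {0}. angle_vec_sub a ?V) \<le> c"
      by (rule sin_sup_le[OF ne]) (use each c0 in auto)
    then show ?thesis using False by (simp add: angle_sub_sub_def)
  qed
  then show ?thesis using rhs by simp
qed

end
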